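(* Let $ABC$ be a hyperbolic triangle with sides $a=BC$, $b=CA$, $c=AB$ and angles $\alpha,\beta,\gamma$ at $A,B,C$ respectively, such that $\alpha>\pi/2$. Then $$\pi-\alpha<\beta+\gamma\cosh a.$$ *)

theory Defs
  imports "HOL-Analysis.Analysis"
begin

text \<open>Hyperboloid model of the hyperbolic plane: points of R^3 (as triples)
  with Minkowski form -x0 y0 + x1 y1 + x2 y2 equal to -1 and x0 > 0.\<close>

type_synonym mpt = "real \<times> real \<times> real"

definition mink :: "mpt \<Rightarrow> mpt \<Rightarrow> real" where
  "mink p q = - fst p * fst q + fst (snd p) * fst (snd q) + snd (snd p) * snd (snd q)"

definition hyp_point :: "mpt \<Rightarrow> bool" where
  "hyp_point p \<longleftrightarrow> mink p p = -1 \<and> fst p > 0"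

definition hdist :: "mpt \<Rightarrow> mpt \<Rightarrow> real" where
  "hdist p q = arcosh (- mink p q)"

text \<open>Initial tangent vector at a of the geodesic from a to p
  (projection of p onto the tangent space at a).\<close>
definition tvec :: "mpt \<Rightarrow> mpt \<Rightarrow> mpt" where
  "tvec a p = p + mink a p *\<^sub>R a"

definition hangle :: "mpt \<Rightarrow> mpt \<Rightarrow> mpt \<Rightarrow> real" where
  "hangle a p q = arccos (mink (tvec a p) (tvec a q) /
      sqrt (mink (tvec a p) (tvec a p) * mink (tvec a q) (tvec a q)))"

text \<open>A (non-degenerate) hyperbolic triangle: three points of the hyperbolic plane
  not on a common geodesic, i.e. linearly independent as vectors of R^3.\<close>
definition hyp_triangle :: "mpt \<Rightarrow> mpt \<Rightarrow> mpt \<Rightarrow> bool" where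
  "hyp_triangle A B C \<longleftrightarrow> hyp_point A \<and> hyp_point B \<and> hyp_point C \<and>
     (\<forall>r s t. r *\<^sub>R A + s *\<^sub>R B + t *\<^sub>R C = 0 \<longrightarrow> r = 0 \<and> s = 0 \<and> t = 0)"

end

theory Submission
  imports Defs
begin


lemma x_le_tan:
  fixes h :: real assumes "0 \<le> h" "h < pi/2" shows "h \<le> tan h"
proof -
  let ?f = "\<lambda>x. tan x - x"
  have "\<exists>y. DERIV ?f u :> y \<and> y \<ge> 0" if u: "0 \<le> u" "u \<le> h" for u
  proof -
    have c: "cos u > 0" using u assms by (intro cos_gt_zero_pi) auto
    then have "cos u \<noteq> 0" by simp
    then have d: "DERIV ?f u :> inverse (cos u ^ 2) - 1"
      using DERIV_diff[OF DERIV_tan[OF \<open>cos u \<noteq> 0\<close>] DERIV_ident] by simp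
    have "cos u ^ 2 \<le> 1" using sin_cos_squared_add[of u] zero_le_power2[of "sin u"] by linarith
    then have "0 \<le> inverse (cos u ^ 2) - 1" using c by (simp add: field_simps)
    with d show ?thesis by blast
  qed
  then have "?f 0 \<le> ?f h"
    using DERIV_nonneg_imp_nondecreasing[OF assms(1), of ?f] by blast
  then show ?thesis by simp
qed
lemma arccos_facts:
  fixes u S r :: real
  assumes "S > 0" "r > 0" "u^2 + r^2 = S^2"
  shows "cos (arccos (u/S)) = u/S" "sin (arccos (u/S)) = r/S"
        "0 < arccos (u/S)" "arccos (u/S) < pi" "u < S" "-S < u"
proof -
  have "r^2 > 0" using assms by simp
  then have "u^2 < S^2" using assms by linarith
  then have a: "\<bar>u\<bar> < S" using assms(1) power2_less_imp_less[of "\<bar>u\<bar>" S] by simp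
  then show "u < S" "-S < u" by auto
  then have b: "-1 < u/S" "u/S < 1" using assms(1) by (auto simp: field_simps)
  then show "cos (arccos (u/S)) = u/S" "0 < arccos (u/S)" "arccos (u/S) < pi"
    using arccos_lt_bounded by auto
  have "sin (arccos (u/S)) = sqrt (1 - (u/S)^2)" using b by (simp add: sin_arccos)
  also have "1 - (u/S)^2 = (r/S)^2" using assms by (simp add: field_simps power_divide)
  also have "sqrt ((r/S)^2) = r/S" using assms by simp
  finally show "sin (arccos (u/S)) = r/S" .
qed


lemma real_main:
  fixes x y z :: real
  assumes x1: "x > 1" and y1: "y > 1" and z1: "z > 1"
    and dp: "1 + 2*x*y*z - x^2 - y^2 - z^2 > 0" and obt0: "arccos ((y*z-x)/(sqrt (z^2-1) * sqrt (y^2-1))) > pi/2"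
  shows "pi - arccos ((y*z-x)/(sqrt (z^2-1)* sqrt (y^2-1)))
     < arccos ((x*z-y)/(sqrt (x^2-1)* sqrt (z^2-1))) + arccos ((x*y-z)/(sqrt (y^2-1)* sqrt (x^2-1))) * x"
proof -
  define Sx where "Sx = sqrt (x^2-1)"
  define Sy where "Sy = sqrt (y^2-1)"
  define Sz where "Sz = sqrt (z^2-1)"
  define r where "r = sqrt (1 + 2*x*y*z - x^2 - y^2 - z^2)"
  have x2: "x^2 > 1" using x1 by (simp add: one_less_power)
  have y2: "y^2 > 1" using y1 by (simp add: one_less_power)
  have z2: "z^2 > 1" using z1 by (simp add: one_less_power)
  have Sxp: "Sx > 0" and Sxs: "Sx^2 = x^2-1" using x2 by (simp_all add: Sx_def)
  have Syp: "Sy > 0" and Sys: "Sy^2 = y^2-1" using y2 by (simp_all add: Sy_def)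
  have Szp: "Sz > 0" and Szs: "Sz^2 = z^2-1" using z2 by (simp_all add: Sz_def)
  have rp: "r > 0" and rs: "r^2 = 1 + 2*x*y*z - x^2 - y^2 - z^2" using dp by (simp_all add: r_def)
  define u1 where "u1 = y*z-x"
  define u2 where "u2 = x*z-y"
  define u3 where "u3 = x*y-z"
  define S1 where "S1 = Sz*Sy"
  define S2 where "S2 = Sx*Sz"
  define S3 where "S3 = Sy*Sx"
  have S1p: "S1 > 0" using Syp Szp by (simp add: S1_def)
  have S2p: "S2 > 0" using Sxp Szp by (simp add: S2_def)
  have S3p: "S3 > 0" using Sxp Syp by (simp add: S3_def)
  have e1: "u1^2 + r^2 = S1^2" unfolding S1_def power_mult_distrib Szs Sys rs u1_def by algebra
  have e2: "u2^2 + r^2 = S2^2" unfolding S2_def power_mult_distrib Sxs Szs rs u2_def by algebra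
  have e3: "u3^2 + r^2 = S3^2" unfolding S3_def power_mult_distrib Sxs Sys rs u3_def by algebra
  define \<alpha> where "\<alpha> = arccos (u1/S1)"
  define \<beta> where "\<beta> = arccos (u2/S2)"
  define \<gamma> where "\<gamma> = arccos (u3/S3)"
  note f1 = arccos_facts[OF S1p rp e1, folded \<alpha>_def]
  note f2 = arccos_facts[OF S2p rp e2, folded \<beta>_def]
  note f3 = arccos_facts[OF S3p rp e3, folded \<gamma>_def]
  have obt: "y*z < x"
  proof (rule ccontr)
    assume "\<not> y*z < x"
    then have "0 \<le> u1/S1" using S1p by (simp add: u1_def)
    moreover have "u1/S1 \<le> 1" using f1 S1p by simp
    ultimately have "\<alpha> \<le> pi/2" unfolding \<alpha>_def by (rule arccos_le_pi2)
    moreover have "\<alpha> = arccos ((y*z-x)/(sqrt (z^2-1) * sqrt (y^2-1)))"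
      by (simp add: \<alpha>_def u1_def S1_def Sz_def Sy_def)
    ultimately show False using obt0 by simp
  qed
  define P where "P = (x^2-1)*(y^2-1)*(z^2-1)"
  have "S1*S2*S3 = Sx^2*Sy^2*Sz^2" unfolding S1_def S2_def S3_def by (simp add: power2_eq_square mult_ac)
  then have SSS: "S1*S2*S3 = P" unfolding P_def Sxs Sys Szs by simp
  have Pp: "P > 0" using SSS S1p S2p S3p by (metis mult_pos_pos)
  define K where "K = (x-1)*(y-1)*(z-1)"
  have Kp: "K > 0" using x1 y1 z1 by (simp add: K_def)
  have PK: "P = K*((x+1)*(y+1)*(z+1))" unfolding P_def K_def by (simp add: power2_eq_square algebra_simps)
  have "sin (\<alpha>+\<beta>+\<gamma>) = sin \<alpha> * cos \<beta> * cos \<gamma> + cos \<alpha> * sin \<beta> * cos \<gamma> + cos \<alpha> * cos \<beta> * sin \<gamma> - sin \<alpha> * sin \<beta> * sin \<gamma>"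
    by (simp add: sin_add cos_add algebra_simps)
  also have "\<dots> = r*(u2*u3+u1*u3+u1*u2-r^2)/(S1*S2*S3)"
    using S1p S2p S3p by (simp add: f1 f2 f3 field_simps power2_eq_square)
  also have "u2*u3+u1*u3+u1*u2-r^2 = (1+x+y+z)*K"
    unfolding rs u1_def u2_def u3_def K_def by algebra
  finally have sinS: "sin (\<alpha>+\<beta>+\<gamma>) = r*(1+x+y+z)*K/P" by (simp add: SSS)
  have "cos (\<alpha>+\<beta>+\<gamma>) = cos \<alpha> * cos \<beta> * cos \<gamma> - cos \<alpha> * sin \<beta> * sin \<gamma> - sin \<alpha> * cos \<beta> * sin \<gamma> - sin \<alpha> * sin \<beta> * cos \<gamma>"
    by (simp add: sin_add cos_add algebra_simps)
  also have "\<dots> = (u1*u2*u3 - r^2*(u1+u2+u3))/(S1*S2*S3)"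
    using S1p S2p S3p by (simp add: f1 f2 f3 field_simps power2_eq_square)
  finally have cosS: "cos (\<alpha>+\<beta>+\<gamma>) = (u1*u2*u3 - r^2*(u1+u2+u3))/P" by (simp add: SSS)
  have idc: "P - (u1*u2*u3 - r^2*(u1+u2+u3)) = (1+x+y+z)^2*K"
    unfolding rs u1_def u2_def u3_def K_def P_def by algebra
  define D where "D = pi - (\<alpha>+\<beta>+\<gamma>)"
  have sinD: "sin D = r*(1+x+y+z)*K/P" unfolding D_def by (simp add: sinS)
  have cD: "cos D = - cos (\<alpha>+\<beta>+\<gamma>)" unfolding D_def by simp
  have "1 + cos D = (P - (u1*u2*u3 - r^2*(u1+u2+u3)))/P" unfolding cD cosS using Pp
    by (simp add: field_simps)
  then have cosD: "1 + cos D = (1+x+y+z)^2*K/P" unfolding idc .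
  have rel: "sin D * (1+x+y+z) = r * (1 + cos D)"
    unfolding sinD cosD using Pp by (simp add: field_simps power2_eq_square)
  have yx: "y < x"
  proof -
    have "y*1 < y*z" using y1 z1 by (intro mult_strict_left_mono) auto
    then show ?thesis using obt by simp
  qed
  have gpos: "\<gamma> > 0" using f3 by simp
  have goal: "D < \<gamma> * (x-1)"
  proof (cases "D \<le> 0")
    case True
    have "\<gamma> * (x-1) > 0" using gpos x1 by simp
    then show ?thesis using True by linarith
  next
    case False
    define h where "h = D/2"
    have hp: "0 < h" using False by (simp add: h_def)
    have hl: "h < pi/2" using f1 f2 f3 by (simp add: h_def D_def)
    have ch: "cos h > 0" using hp hl by (intro cos_gt_zero_pi) auto
    have "sin D = 2 * sin h * cos h" "cos D = 2 * cos h ^ 2 - 1"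
      using sin_double[of h] cos_double_cos[of h] by (simp_all add: h_def)
    then have "2 * sin h * cos h * (1+x+y+z) = r * (2 * cos h ^ 2)" using rel by simp
    then have "sin h * (1+x+y+z) = r * cos h" using ch by (simp add: power2_eq_square)
    then have th: "tan h = r/(1+x+y+z)" using ch x1 y1 z1 by (simp add: tan_def field_simps)
    have hle: "h \<le> r/(1+x+y+z)" using x_le_tan[of h] hp hl th by simp
    have "S3^2 \<le> ((x-1)*(1+y))^2"
    proof -
      have "S3^2 = (x^2-1)*(y^2-1)" by (simp add: S3_def power_mult_distrib Sxs Sys)
      also have "\<dots> = ((x-1)*(1+y))*((x+1)*(y-1))" by (simp add: power2_eq_square algebra_simps)
      also have "\<dots> \<le> ((x-1)*(1+y))*((x-1)*(y+1))"
      proof (rule mult_left_mono)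
        show "(x+1)*(y-1) \<le> (x-1)*(y+1)" using yx by (simp add: algebra_simps)
        show "0 \<le> (x-1)*(1+y)" using x1 y1 by simp
      qed
      also have "((x-1)*(1+y))*((x-1)*(y+1)) = ((x-1)*(1+y))^2" by (simp add: power2_eq_square add.commute)
      finally show ?thesis .
    qed
    moreover have "0 \<le> (x-1)*(1+y)" using x1 y1 by simp
    ultimately have S3le: "S3 \<le> (x-1)*(1+y)" by (rule power2_le_imp_le)
    have u3lt: "x*y - z < S3" using f3 by (simp add: u3_def)
    then have "1+x+y+(x*y - S3) < 1+x+y+z" by linarith
    then have m1: "(x-1)*(1+x+y+(x*y - S3)) < (x-1)*(1+x+y+z)"
      using x1 by (intro mult_strict_left_mono) auto
    have m2: "(x+1)*S3 \<le> (x+1)*((x-1)*(1+y))" using S3le x1 by (intro mult_left_mono) auto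
    have m3: "(x-1)*(1+x+y+(x*y - S3)) = (x+1)*((x-1)*(1+y)) - (x-1)*S3" by (simp add: algebra_simps)
    have m4: "(x+1)*S3 - (x-1)*S3 = 2*S3" by (simp add: algebra_simps)
    have key: "2*S3 < (x-1)*(1+x+y+z)" using m1 m2 m3 m4 by linarith
    define W where "W = 1+x+y+z"
    have Wp: "W > 0" using x1 y1 z1 by (simp add: W_def)
    have "2*S3*r < (x-1)*W*r" using mult_strict_right_mono[OF key rp] by (simp add: W_def)
    then have "(2*S3*r)/(W*S3) < ((x-1)*W*r)/(W*S3)" using Wp S3p by (intro divide_strict_right_mono) auto
    moreover have "2*(r/W) = (2*S3*r)/(W*S3)" using S3p Wp by (simp add: field_simps)
    moreover have "(x-1)*(r/S3) = ((x-1)*W*r)/(W*S3)" using S3p Wp by (simp add: field_simps)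
    ultimately have c1: "2*(r/(1+x+y+z)) < (x-1)*(r/S3)" by (simp add: W_def)
    have "sin \<gamma> \<le> \<gamma>" using sin_x_le_x[of \<gamma>] gpos by simp
    then have "r/S3 \<le> \<gamma>" using f3 by simp
    then have c2: "(x-1)*(r/S3) \<le> (x-1)*\<gamma>" using x1 by (intro mult_left_mono) auto
    have "D = 2*h" by (simp add: h_def)
    then have "D < (x-1)*\<gamma>" using hle c1 c2 by linarith
    then show ?thesis by (simp add: mult.commute)
  qed
  have "pi - \<alpha> < \<beta> + \<gamma> * x" using goal unfolding D_def by (simp add: algebra_simps)
  then show ?thesis
    unfolding \<alpha>_def \<beta>_def \<gamma>_def u1_def u2_def u3_def S1_def S2_def S3_def Sx_def Sy_def Sz_def .
qed



lemma mink_sym: "mink p q = mink q p"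
  by (simp add: mink_def mult.commute)

lemma mink_tvec:
  assumes "hyp_point P"
  shows "mink (tvec P Q) (tvec P R) = mink Q R + mink P Q * mink P R"
proof -
  have pp: "mink P P = -1" using assms by (simp add: hyp_point_def)
  obtain p0 p1 p2 where P: "P = (p0,p1,p2)" by (cases P) auto
  obtain q0 q1 q2 where Q: "Q = (q0,q1,q2)" by (cases Q) auto
  obtain r0 r1 r2 where R: "R = (r0,r1,r2)" by (cases R) auto
  have "- p0 * p0 + p1 * p1 + p2 * p2 = -1" using pp by (simp add: mink_def P)
  then show ?thesis unfolding tvec_def P Q R mink_def
    by (simp only: prod.sel fst_add snd_add fst_scaleR snd_scaleR real_scaleR_def) algebra
qed

lemma mink_ge1:
  assumes "hyp_point P" "hyp_point Q"
  shows "- mink P Q \<ge> 1"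
proof -
  obtain p0 p1 p2 where P: "P = (p0,p1,p2)" by (cases P) auto
  obtain q0 q1 q2 where Q: "Q = (q0,q1,q2)" by (cases Q) auto
  have h1: "-p0*p0 + p1*p1+p2*p2 = -1" "p0 > 0" using assms(1) unfolding hyp_point_def mink_def P by simp_all
  have h2: "-q0*q0 + q1*q1+q2*q2 = -1" "q0 > 0" using assms(2) unfolding hyp_point_def mink_def Q by simp_all
  have hp: "p0^2 = 1 + p1^2 + p2^2" using h1(1) unfolding power2_eq_square by linarith
  have hq: "q0^2 = 1 + q1^2 + q2^2" using h2(1) unfolding power2_eq_square by linarith
  have "(p0*q0)^2 - (1 + (p1*q1+p2*q2))^2 = (p1-q1)^2 + (p2-q2)^2 + (p1*q2-p2*q1)^2"
    unfolding power_mult_distrib hp hq by algebra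
  moreover have "0 \<le> (p1-q1)^2 + (p2-q2)^2 + (p1*q2-p2*q1)^2" by simp
  ultimately have "\<bar>1 + (p1*q1+p2*q2)\<bar>^2 \<le> (p0*q0)^2" unfolding power2_abs by linarith
  moreover have "0 \<le> p0*q0" using h1(2) h2(2) by simp
  ultimately have "\<bar>1 + (p1*q1+p2*q2)\<bar> \<le> p0*q0" by (rule power2_le_imp_le)
  then have "1 + (p1*q1+p2*q2) \<le> p0*q0" by (meson abs_ge_self order_trans)
  moreover have "- mink P Q = p0*q0 - (p1*q1+p2*q2)" by (simp add: mink_def P Q)
  ultimately show ?thesis by linarith
qed

lemma triangle_delta:
  assumes "hyp_triangle A B C"
  shows "1 + 2*(- mink B C)*(- mink C A)*(- mink A B) - (mink B C)^2 - (mink C A)^2 - (mink A B)^2 > 0"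
proof -
  obtain a0 a1 a2 where A: "A = (a0,a1,a2)" by (cases A) auto
  obtain b0 b1 b2 where B: "B = (b0,b1,b2)" by (cases B) auto
  obtain c0 c1 c2 where C: "C = (c0,c1,c2)" by (cases C) auto
  have pA: "hyp_point A" and pB: "hyp_point B" and pC: "hyp_point C"
    and indep: "\<forall>r s t. r *\<^sub>R A + s *\<^sub>R B + t *\<^sub>R C = 0 \<longrightarrow> r = 0 \<and> s = 0 \<and> t = 0"
    using assms unfolding hyp_triangle_def by blast+
  have ha: "- a0 * a0 + a1 * a1 + a2 * a2 = -1" "a0 > 0" using pA
    unfolding hyp_point_def mink_def A by simp_all
  have hb: "- b0 * b0 + b1 * b1 + b2 * b2 = -1" using pB
    unfolding hyp_point_def mink_def B by simp
  have hc: "- c0 * c0 + c1 * c1 + c2 * c2 = -1" using pC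
    unfolding hyp_point_def mink_def C by simp
  have ind: "r = 0 \<and> s = 0 \<and> t = 0"
    if "r*a0 + s*b0 + t*c0 = 0" "r*a1 + s*b1 + t*c1 = 0" "r*a2 + s*b2 + t*c2 = 0" for r s t
  proof -
    have "r *\<^sub>R A + s *\<^sub>R B + t *\<^sub>R C = 0"
      unfolding A B C using that by (simp add: zero_prod_def)
    then show ?thesis using indep by blast
  qed
  define dt where "dt = a0*(b1*c2 - b2*c1) - b0*(a1*c2 - a2*c1) + c0*(a1*b2 - a2*b1)"
  have dt_eq: "1 + 2*(- mink B C)*(- mink C A)*(- mink A B) - (mink B C)^2 - (mink C A)^2 - (mink A B)^2 = dt^2"
  proof -
    have "1 + 2*(- mink B C)*(- mink C A)*(- mink A B) - (mink B C)^2 - (mink C A)^2 - (mink A B)^2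
      = - ((- a0 * a0 + a1 * a1 + a2 * a2) * (- b0 * b0 + b1 * b1 + b2 * b2) * (- c0 * c0 + c1 * c1 + c2 * c2)
          + 2 * mink B C * mink C A * mink A B
          - (- a0 * a0 + a1 * a1 + a2 * a2) * (mink B C)^2
          - (- b0 * b0 + b1 * b1 + b2 * b2) * (mink C A)^2
          - (- c0 * c0 + c1 * c1 + c2 * c2) * (mink A B)^2)"
      unfolding ha(1) hb hc by simp
    also have "\<dots> = dt^2" unfolding dt_def mink_def A B C by (simp only: fst_conv snd_conv) algebra
    finally show ?thesis .
  qed
  have "dt \<noteq> 0"
  proof
    assume d0: "dt = 0"
    have k0: "(b1*c2-b2*c1) = 0 \<and> (c1*a2-c2*a1) = 0 \<and> (a1*b2-a2*b1) = 0"
    proof (rule ind)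
      show "(b1*c2-b2*c1)*a0 + (c1*a2-c2*a1)*b0 + (a1*b2-a2*b1)*c0 = 0" using d0 unfolding dt_def by algebra
      show "(b1*c2-b2*c1)*a1 + (c1*a2-c2*a1)*b1 + (a1*b2-a2*b1)*c1 = 0" by (simp add: algebra_simps)
      show "(b1*c2-b2*c1)*a2 + (c1*a2-c2*a1)*b2 + (a1*b2-a2*b1)*c2 = 0" by (simp add: algebra_simps)
    qed
    have k1: "(b2*c0-b0*c2) = 0 \<and> (c2*a0-c0*a2) = 0 \<and> (a2*b0-a0*b2) = 0"
    proof (rule ind)
      show "(b2*c0-b0*c2)*a0 + (c2*a0-c0*a2)*b0 + (a2*b0-a0*b2)*c0 = 0" by (simp add: algebra_simps)
      show "(b2*c0-b0*c2)*a1 + (c2*a0-c0*a2)*b1 + (a2*b0-a0*b2)*c1 = 0" using d0 unfolding dt_def by algebra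
      show "(b2*c0-b0*c2)*a2 + (c2*a0-c0*a2)*b2 + (a2*b0-a0*b2)*c2 = 0" by (simp add: algebra_simps)
    qed
    have k2: "(b0*c1-b1*c0) = 0 \<and> (c0*a1-c1*a0) = 0 \<and> (a0*b1-a1*b0) = 0"
    proof (rule ind)
      show "(b0*c1-b1*c0)*a0 + (c0*a1-c1*a0)*b0 + (a0*b1-a1*b0)*c0 = 0" by (simp add: algebra_simps)
      show "(b0*c1-b1*c0)*a1 + (c0*a1-c1*a0)*b1 + (a0*b1-a1*b0)*c1 = 0" by (simp add: algebra_simps)
      show "(b0*c1-b1*c0)*a2 + (c0*a1-c1*a0)*b2 + (a0*b1-a1*b0)*c2 = 0" using d0 unfolding dt_def by algebra
    qed
    have "b0 = 0 \<and> -a0 = 0 \<and> (0::real) = 0"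
    proof (rule ind)
      show "b0*a0 + (-a0)*b0 + 0*c0 = 0" by simp
      show "b0*a1 + (-a0)*b1 + 0*c1 = 0" using k2 by (simp add: algebra_simps)
      show "b0*a2 + (-a0)*b2 + 0*c2 = 0" using k1 by (simp add: algebra_simps)
    qed
    then show False using ha(2) by simp
  qed
  then show ?thesis unfolding dt_eq by simp
qed



lemma hangle_eq:
  assumes "hyp_point P" "hyp_point Q" "hyp_point R"
  shows "hangle P Q R = arccos (((-mink P Q)*(-mink P R) - (-mink Q R)) /
           (sqrt ((-mink P Q)^2 - 1) * sqrt ((-mink P R)^2 - 1)))"
proof -
  have qq: "mink Q Q = -1" using assms(2) by (simp add: hyp_point_def)
  have rr: "mink R R = -1" using assms(3) by (simp add: hyp_point_def)
  have t1: "mink (tvec P Q) (tvec P R) = (-mink P Q)*(-mink P R) - (-mink Q R)"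
    using mink_tvec[OF assms(1), of Q R] by simp
  have t2: "mink (tvec P Q) (tvec P Q) = (-mink P Q)^2 - 1"
    using mink_tvec[OF assms(1), of Q Q] qq by (simp add: power2_eq_square)
  have t3: "mink (tvec P R) (tvec P R) = (-mink P R)^2 - 1"
    using mink_tvec[OF assms(1), of R R] rr by (simp add: power2_eq_square)
  show ?thesis unfolding hangle_def t1 t2 t3 real_sqrt_mult ..
qed

theorem lemma5p2p5:
  fixes A B C :: mpt and a b c \<alpha> \<beta> \<gamma> :: real
  assumes "hyp_triangle A B C"
    and "a = hdist B C" and "b = hdist C A" and "c = hdist A B"
    and "\<alpha> = hangle A B C" and "\<beta> = hangle B C A" and "\<gamma> = hangle C A B"
    and "\<alpha> > pi / 2"
  shows "pi - \<alpha> < \<beta> + \<gamma> * cosh a"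
proof -
  have pA: "hyp_point A" and pB: "hyp_point B" and pC: "hyp_point C"
    using assms(1) unfolding hyp_triangle_def by blast+
  define x where "x = - mink B C"
  define y where "y = - mink C A"
  define z where "z = - mink A B"
  have x1: "x \<ge> 1" using mink_ge1[OF pB pC] by (simp add: x_def)
  have y1: "y \<ge> 1" using mink_ge1[OF pC pA] by (simp add: y_def)
  have z1: "z \<ge> 1" using mink_ge1[OF pA pB] by (simp add: z_def)
  have dp: "1 + 2*x*y*z - x^2 - y^2 - z^2 > 0"
    using triangle_delta[OF assms(1)] by (simp add: x_def y_def z_def)
  have x1': "x > 1"
  proof (rule ccontr)
    assume "\<not> x > 1" then have "x = 1" using x1 by simp
    then have "1 + 2*x*y*z - x^2 - y^2 - z^2 + (y - z)^2 = 0" by (simp add: power2_eq_square algebra_simps)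
    moreover have "0 \<le> (y - z)^2 + (x - z)^2*0" by simp
    ultimately show False using dp by (smt (verit) zero_le_power2)
  qed
  have y1': "y > 1"
  proof (rule ccontr)
    assume "\<not> y > 1" then have "y = 1" using y1 by simp
    then have "1 + 2*x*y*z - x^2 - y^2 - z^2 + (x - z)^2 = 0" by (simp add: power2_eq_square algebra_simps)
    moreover have "0 \<le> (y - z)^2 + (x - z)^2*0" by simp
    ultimately show False using dp by (smt (verit) zero_le_power2)
  qed
  have z1': "z > 1"
  proof (rule ccontr)
    assume "\<not> z > 1" then have "z = 1" using z1 by simp
    then have "1 + 2*x*y*z - x^2 - y^2 - z^2 + (x - y)^2 = 0" by (simp add: power2_eq_square algebra_simps)
    moreover have "0 \<le> (y - z)^2 + (x - z)^2*0" by simp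
    ultimately show False using dp by (smt (verit) zero_le_power2)
  qed
  have ea: "\<alpha> = arccos ((y*z-x)/(sqrt (z^2-1) * sqrt (y^2-1)))"
    unfolding assms(5) hangle_eq[OF pA pB pC] x_def y_def z_def
    by (simp add: mink_sym[of A C] mult.commute)
  have eb: "\<beta> = arccos ((x*z-y)/(sqrt (x^2-1) * sqrt (z^2-1)))"
    unfolding assms(6) hangle_eq[OF pB pC pA] x_def y_def z_def
    by (simp add: mink_sym[of B A] mult.commute)
  have eg: "\<gamma> = arccos ((x*y-z)/(sqrt (y^2-1) * sqrt (x^2-1)))"
    unfolding assms(7) hangle_eq[OF pC pA pB] x_def y_def z_def
    by (simp add: mink_sym[of C B] mult.commute)
  have ca: "cosh a = x"
  proof -
    have "cosh a = cosh (arcosh x)" by (simp add: assms(2) hdist_def x_def)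
    also have "\<dots> = x" using x1 by (simp add: cosh_arcosh_real)
    finally show ?thesis .
  qed
  show ?thesis
    using real_main[OF x1' y1' z1' dp] assms(8) unfolding ea eb eg ca by simp
qed

end
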